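(* Let $X$ be the subshift obtained from the marker construction described in the context, and let $j \in \mathbb{N}$. If $x \in X$ and $x_{[0,l_j)}$ is a word in $\mathcal{C}_j$, then every $k>0$ with $x_{[k,k+l_j)} = x_{[0,l_j)}$ is a multiple of $l_j$. In particular the first return time $R_{l_j}(x) = \inf\{k>0 : x_{[k,k+l_j)} = x_{[0,l_j)}\}$ is a multiple of $l_j$.
   Context: Marker construction. Let $l_1$ be a sufficiently large perfect square and $N_1 = 2^{\sqrt{l_1}}$. Let $\mathcal{C}_1$ be a set of $N_1$ binary words of length $l_1$, each beginning with $001$, such that the word $00$ occurs in each element of $\mathcal{C}_1$ only as its prefix. Inductively, given a set $\mathcal{C}_j$ of $N_j$ distinct words of length $l_j$ with an ordering $\mathcal{C}_j = \{u_1^{(j)},\dots,u_{N_j}^{(j)}\}$, let $P_j = \{2\}\cup\{i^2 : 2 \le i \le \lfloor\sqrt{N_j}\rfloor\}$, and let $\mathcal{C}_{j+1}$ be the set of all words $u^{(j)}_{\pi(1)}u^{(j)}_{\pi(2)}\cdots u^{(j)}_{\pi(N_j)}$ where $\pi$ ranges over permutations of $\{1,\dots,N_j\}$ fixing every element outside $P_j$. Thus $N_{j+1} = (\lfloor\sqrt{N_j}\rfloor)!$ and $l_{j+1} = l_j N_j$. The ordering of $\mathcal{C}_{j+1}$ is arbitrary except that its first element $u^{(j+1)}_1$ is $u_1^{(j)}u_2^{(j)}\cdots u_{N_j}^{(j)}$ (identity permutation). Words $u_i^{(j)}$ with $i\in P_j$ are called permuted, the others unpermuted. $X \subset \{0,1\}^{\mathbb{Z}}$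 is the set of bi-infinite sequences each finite subword of which is a subword of some word in $\bigcup_j \mathcal{C}_j$; it is a strictly ergodic subshift. *)

theory Defs
  imports Main "HOL-Library.Sublist" "HOL-Library.Discrete_Functions" "HOL-Combinatorics.Permutations"
begin

text \<open>Levels are numbered from 1 as in the paper. Words are bool lists (False = 0, True = 1).
  The ordered set C_j is given by u j :: nat => bool list on indices 1..N_j.\<close>

fun mk_N :: "nat \<Rightarrow> nat \<Rightarrow> nat" where
  "mk_N l1 0 = 0"
| "mk_N l1 (Suc 0) = 2 ^ floor_sqrt l1"
| "mk_N l1 (Suc (Suc j)) = fact (floor_sqrt (mk_N l1 (Suc j)))"

fun mk_l :: "nat \<Rightarrow> nat \<Rightarrow> nat" where
  "mk_l l1 0 = 0"
| "mk_l l1 (Suc 0) = l1"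
| "mk_l l1 (Suc (Suc j)) = mk_l l1 (Suc j) * mk_N l1 (Suc j)"

definition Pset :: "nat \<Rightarrow> nat set" where
  "Pset n = {2} \<union> {i^2 | i. 2 \<le> i \<and> i \<le> floor_sqrt n}"

definition Cset :: "nat \<Rightarrow> (nat \<Rightarrow> nat \<Rightarrow> bool list) \<Rightarrow> nat \<Rightarrow> bool list set" where
  "Cset l1 u j = u j ` {1..mk_N l1 j}"

definition marker_system :: "nat \<Rightarrow> (nat \<Rightarrow> nat \<Rightarrow> bool list) \<Rightarrow> bool" where
  "marker_system l1 u \<longleftrightarrow>
     (\<exists>m. l1 = m^2)
   \<and> inj_on (u 1) {1..mk_N l1 1}
   \<and> (\<forall>i\<in>{1..mk_N l1 1}. length (u 1 i) = l1
        \<and> take 3 (u 1 i) = [False, False, True]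
        \<and> (\<forall>p. p + 1 < length (u 1 i) \<longrightarrow> \<not> u 1 i ! p \<longrightarrow> \<not> u 1 i ! (p+1) \<longrightarrow> p = 0))
   \<and> (\<forall>j\<ge>1. inj_on (u (Suc j)) {1..mk_N l1 (Suc j)}
        \<and> Cset l1 u (Suc j) =
            {concat (map (\<lambda>i. u j (\<pi> i)) [1..<mk_N l1 j + 1]) | \<pi>.
               \<pi> permutes (Pset (mk_N l1 j) \<inter> {1..mk_N l1 j})}
        \<and> u (Suc j) 1 = concat (map (u j) [1..<mk_N l1 j + 1]))"

definition subword :: "(int \<Rightarrow> bool) \<Rightarrow> int \<Rightarrow> nat \<Rightarrow> bool list" where
  "subword x a n = map (\<lambda>i. x (a + int i)) [0..<n]"

definition marker_X :: "nat \<Rightarrow> (nat \<Rightarrow> nat \<Rightarrow> bool list) \<Rightarrow> (int \<Rightarrow> bool) set" where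
  "marker_X l1 u = {x. \<forall>a n. \<exists>j\<ge>1. \<exists>w\<in>Cset l1 u j. sublist (subword x a n) w}"

end

theory Submission
  imports Defs
begin

lemma N_pos: assumes "1 \<le> j" shows "1 \<le> mk_N l1 j"
proof (cases j)
  case 0 then show ?thesis using assms by simp
next
  case (Suc k) then show ?thesis by (cases k) auto
qed

lemma length_subword[simp]: "length (subword x a n) = n"
  by (simp add: subword_def)

lemma l_Suc: "1 \<le> j \<Longrightarrow> mk_l l1 (Suc j) = mk_l l1 j * mk_N l1 j"
  by (cases j) auto

lemma l_mono: assumes "1 \<le> j" "j \<le> m" shows "mk_l l1 j \<le> mk_l l1 m"
  using assms(2)
proof (induction m rule: dec_induct)
  case base then show ?case by simp
next
  case (step m)
  have "1 \<le> m" using step assms by simp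
  then have "mk_l l1 (Suc m) = mk_l l1 m * mk_N l1 m" by (rule l_Suc)
  moreover have "1 \<le> mk_N l1 m" using \<open>1 \<le> m\<close> by (rule N_pos)
  ultimately show ?case using step by (metis le_trans mult_le_mono2 mult.right_neutral)
qed

lemma nth_concat_uniform:
  "\<forall>w\<in>set ws. length w = l \<Longrightarrow> q < length ws \<Longrightarrow> r < l \<Longrightarrow> concat ws ! (q*l + r) = ws!q!r"
proof (induction ws arbitrary: q)
  case Nil then show ?case by simp
next
  case (Cons w ws)
  show ?case
  proof (cases q)
    case 0 then show ?thesis using Cons by (simp add: nth_append)
  next
    case (Suc q')
    have "concat (w#ws) ! (q*l+r) = concat ws ! (q'*l + r)"
      using Cons Suc by (simp add: nth_append add.assoc)
    then show ?thesis using Cons Suc by simp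
  qed
qed

lemma take_drop_concat_uniform:
  "\<forall>w\<in>set ws. length w = l \<Longrightarrow> q < length ws \<Longrightarrow> take l (drop (q*l) (concat ws)) = ws!q"
proof (induction ws arbitrary: q)
  case Nil then show ?case by simp
next
  case (Cons w ws)
  show ?case
  proof (cases q)
    case 0 then show ?thesis using Cons by simp
  next
    case (Suc q')
    then show ?thesis using Cons by (simp add: add.commute)
  qed
qed

lemma len_concat: "\<forall>v\<in>set vs. length v = l \<Longrightarrow> length (concat vs) = length vs * l"
  by (induction vs) auto

lemma concat_lists: "\<forall>e\<in>set vs. \<exists>ws. set ws \<subseteq> A \<and> e = concat ws \<Longrightarrow> \<exists>ws. set ws \<subseteq> A \<and> concat vs = concat ws"
proof (induction vs)
  case Nil then show ?case by (intro exI[of _ "[]"]) simp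
next
  case (Cons e vs)
  then obtain ws1 where 1: "set ws1 \<subseteq> A" "e = concat ws1" by auto
  from Cons obtain ws2 where 2: "set ws2 \<subseteq> A" "concat vs = concat ws2" by auto
  show ?case using 1 2 by (intro exI[of _ "ws1 @ ws2"]) simp
qed

lemma choose_list: "\<forall>e\<in>set ws. \<exists>\<pi>. P \<pi> \<and> e = g \<pi> \<Longrightarrow> \<exists>\<pi>s. ws = map g \<pi>s \<and> (\<forall>\<pi>\<in>set \<pi>s. P \<pi>)"
proof (induction ws)
  case Nil then show ?case by simp
next
  case (Cons e ws)
  then obtain \<pi> where "P \<pi>" "e = g \<pi>" by auto
  moreover from Cons obtain \<pi>s where "ws = map g \<pi>s" "\<forall>\<pi>\<in>set \<pi>s. P \<pi>" by auto
  ultimately show ?case by (intro exI[of _ "\<pi> # \<pi>s"]) simp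
qed

lemma perm_range: "\<pi> permutes (Pset n \<inter> {1..n}) \<Longrightarrow> i \<in> {1..n} \<Longrightarrow> \<pi> i \<in> {1..n}"
  by (metis IntD2 permutes_in_image permutes_not_in)

lemma one_notin_Pset: "1 \<notin> Pset n"
proof
  assume "1 \<in> Pset n"
  then obtain i where "1 = i^2" "2 \<le> (i::nat)" unfolding Pset_def by auto
  moreover have "i^2 \<ge> 2^2" using \<open>2 \<le> i\<close> by (rule power_mono) simp
  ultimately show False by simp
qed

lemma perm_fix1: "\<pi> permutes (Pset n \<inter> {1..n}) \<Longrightarrow> \<pi> 1 = 1"
  using one_notin_Pset by (metis IntD1 permutes_not_in)

context
  fixes l1 :: nat and u :: "nat \<Rightarrow> nat \<Rightarrow> bool list"
  assumes ms: "marker_system l1 u"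
begin

lemma inj_u: assumes "1 \<le> j" shows "inj_on (u j) {1..mk_N l1 j}"
proof (cases j)
  case 0 then show ?thesis using assms by simp
next
  case (Suc k)
  show ?thesis
  proof (cases k)
    case 0 then show ?thesis using ms Suc unfolding marker_system_def by simp
  next
    case (Suc k') then show ?thesis using ms \<open>j = Suc k\<close> unfolding marker_system_def by auto
  qed
qed

lemma Cstep: "1 \<le> j \<Longrightarrow> Cset l1 u (Suc j) = {concat (map (\<lambda>i. u j (\<pi> i)) [1..<mk_N l1 j + 1]) | \<pi>.
               \<pi> permutes (Pset (mk_N l1 j) \<inter> {1..mk_N l1 j})}"
  using ms unfolding marker_system_def by blast

lemma C1: "w \<in> Cset l1 u 1 \<Longrightarrow> length w = l1 \<and> take 3 w = [False, False, True]
        \<and> (\<forall>p. p + 1 < length w \<longrightarrow> \<not> w ! p \<longrightarrow> \<not> w ! (p+1) \<longrightarrow> p = 0)"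
  using ms unfolding marker_system_def Cset_def by auto

lemma l1_pos: "0 < l1"
proof -
  have "u 1 1 \<in> Cset l1 u 1" using N_pos[of 1 l1] unfolding Cset_def by auto
  then have "take 3 (u 1 1) = [False, False, True]" "length (u 1 1) = l1" using C1 by auto
  then show ?thesis by (metis list.distinct(1) take_eq_Nil neq0_conv length_0_conv)
qed

lemma l_pos: "1 \<le> j \<Longrightarrow> 0 < mk_l l1 j"
  using l_mono[of 1 j l1] l1_pos by simp

lemma len_C: "1 \<le> j \<Longrightarrow> w \<in> Cset l1 u j \<Longrightarrow> length w = mk_l l1 j"
proof (induction j arbitrary: w rule: dec_induct)
  case base then show ?case using C1 by simp
next
  case (step j)
  then obtain \<pi> where \<pi>: "\<pi> permutes (Pset (mk_N l1 j) \<inter> {1..mk_N l1 j})"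
    and w: "w = concat (map (\<lambda>i. u j (\<pi> i)) [1..<mk_N l1 j + 1])"
    using Cstep[of j] by auto
  have "\<forall>v\<in>set (map (\<lambda>i. u j (\<pi> i)) [1..<mk_N l1 j + 1]). length v = mk_l l1 j"
  proof
    fix v assume "v \<in> set (map (\<lambda>i. u j (\<pi> i)) [1..<mk_N l1 j + 1])"
    then obtain i where "i \<in> set [1..<mk_N l1 j + 1]" "v = u j (\<pi> i)" by auto
    then have "i \<in> {1..mk_N l1 j}" "v = u j (\<pi> i)" by auto
    then have "v \<in> Cset l1 u j" using perm_range[OF \<pi>] unfolding Cset_def by auto
    then show "length v = mk_l l1 j" using step by auto
  qed
  then have "length w = mk_N l1 j * mk_l l1 j" using w len_concat by fastforce
  then show ?case using l_Suc[of j l1] step by simp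
qed

lemma concatC: assumes "1 \<le> j" "j \<le> m" shows "w \<in> Cset l1 u m \<Longrightarrow> \<exists>ws. set ws \<subseteq> Cset l1 u j \<and> w = concat ws"
  using assms(2)
proof (induction m arbitrary: w rule: dec_induct)
  case base then show ?case by (intro exI[of _ "[w]"]) simp
next
  case (step m)
  then obtain \<pi> where \<pi>: "\<pi> permutes (Pset (mk_N l1 m) \<inter> {1..mk_N l1 m})"
    and w: "w = concat (map (\<lambda>i. u m (\<pi> i)) [1..<mk_N l1 m + 1])"
    using Cstep[of m] assms by auto
  have "\<forall>e\<in>set (map (\<lambda>i. u m (\<pi> i)) [1..<mk_N l1 m + 1]). \<exists>ws. set ws \<subseteq> Cset l1 u j \<and> e = concat ws"
  proof
    fix e assume "e \<in> set (map (\<lambda>i. u m (\<pi> i)) [1..<mk_N l1 m + 1])"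
    then obtain i where "i \<in> set [1..<mk_N l1 m + 1]" "e = u m (\<pi> i)" by auto
    then have "i \<in> {1..mk_N l1 m}" "e = u m (\<pi> i)" by auto
    then have "e \<in> Cset l1 u m" using perm_range[OF \<pi>] unfolding Cset_def by auto
    then show "\<exists>ws. set ws \<subseteq> Cset l1 u j \<and> e = concat ws" using step(3) by auto
  qed
  from concat_lists[OF this] show ?case using w by metis
qed

lemma align: "1 \<le> j \<Longrightarrow> set ws \<subseteq> Cset l1 u j \<Longrightarrow> v \<in> Cset l1 u j \<Longrightarrow>
  p + mk_l l1 j \<le> length (concat ws) \<Longrightarrow> take (mk_l l1 j) (drop p (concat ws)) = v \<Longrightarrow> mk_l l1 j dvd p"
proof (induction j arbitrary: ws v p rule: dec_induct)
  case base
  let ?W = "concat ws"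
  have v: "length v = l1" "take 3 v = [False, False, True]" using C1[OF base(2)] by auto
  have "length (take 3 v) = 3" using v(2) by simp
  then have l1: "3 \<le> l1" using v(1) by simp
  have vt: "v!i = take 3 v ! i" if "i<3" for i using that by simp
  have v0: "\<not> v!0" "\<not> v!1" "v!2" using vt[of 0] vt[of 1] vt[of 2] v(2) by simp_all
  have lw: "\<forall>w\<in>set ws. length w = l1" using base C1 by auto
  have lenW: "length ?W = length ws * l1" using len_concat[OF lw] .
  have Wv: "?W ! (p + t) = v ! t" if "t < l1" for t
  proof -
    have "v ! t = take l1 (drop p ?W) ! t" using base(4) by simp
    also have "\<dots> = ?W ! (p + t)" using that base(3) by simp
    finally show ?thesis by simp
  qed
  define q where "q = p div l1"
  define r where "r = p mod l1"
  have p: "p = q * l1 + r" unfolding q_def r_def by simp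
  have r: "r < l1" unfolding r_def using l1 by simp
  have q: "q < length ws"
  proof (rule ccontr)
    assume "\<not> q < length ws"
    then have "length ws * l1 \<le> q * l1" by simp
    moreover have "mk_l l1 1 = l1" by simp
    ultimately show False using base(3) lenW p l1 by linarith
  qed
  have wq: "ws!q \<in> Cset l1 u 1" using q base(1) by auto
  show ?case
  proof (cases "r + 1 < l1")
    case True
    have a: "ws!q!r = v!0" using Wv[of 0] nth_concat_uniform[OF lw q r] p l1 by simp
    have b: "ws!q!(r+1) = v!1" using Wv[of 1] nth_concat_uniform[OF lw q True] p l1 by (simp add: add.assoc)
    have "r = 0" using C1[OF wq] a b v0 True by auto
    then show ?thesis using p by simp
  next
    case False
    then have r1: "r = l1 - 1" using r by simp
    have q1: "Suc q < length ws"
    proof (rule ccontr)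
      assume "\<not> Suc q < length ws"
      then have "length ws * l1 \<le> Suc q * l1" by (intro mult_le_mono1) simp
      moreover have "Suc q * l1 = q * l1 + l1" by simp
      moreover have "mk_l l1 1 = l1" by simp
      ultimately show False using base(3) lenW p l1 r1 by linarith
    qed
    have "p + 2 = Suc q * l1 + 1" using p r1 l1 by simp
    then have "ws!Suc q!1 = v!2" using Wv[of 2] nth_concat_uniform[OF lw q1, of 1] l1 by simp
    moreover have "ws!Suc q \<in> Cset l1 u 1" using q1 base(1) by auto
    then have "take 3 (ws!Suc q) = [False, False, True]" using C1 by blast
    then have "\<not> ws!Suc q!1" by (metis nth_take One_nat_def less_numeral_extra(1) nth_Cons_0 nth_Cons_Suc numeral_3_eq_3 Suc_lessI less_Suc_eq)
    ultimately show ?thesis using v0 by simp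
  qed
next
  case (step j)
  let ?N = "mk_N l1 j" and ?l = "mk_l l1 j"
  let ?S = "Pset ?N \<inter> {1..?N}"
  define B where "B = (\<lambda>\<pi>. map (\<lambda>i. u j (\<pi> i)) [1..<?N + 1])"
  have j1: "1 \<le> j" using step by simp
  have N1: "1 \<le> ?N" using N_pos[OF j1] .
  have lS: "mk_l l1 (Suc j) = ?l * ?N" using l_Suc[OF j1] .
  have "\<forall>e\<in>set ws. \<exists>\<pi>. \<pi> permutes ?S \<and> e = concat (B \<pi>)"
    using step.prems(1) Cstep[OF j1] unfolding B_def by blast
  from choose_list[OF this] obtain \<pi>s where ws: "ws = map (\<lambda>\<pi>. concat (B \<pi>)) \<pi>s"
    and \<pi>s: "\<forall>\<pi>\<in>set \<pi>s. \<pi> permutes ?S" by blast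
  define W where "W = concat (map B \<pi>s)"
  have cW: "concat W = concat ws" unfolding W_def ws by (induction \<pi>s) auto
  have BC: "set (B \<pi>) \<subseteq> Cset l1 u j" if "\<pi> permutes ?S" for \<pi>
    using perm_range[OF that] unfolding B_def Cset_def by auto
  have WC: "set W \<subseteq> Cset l1 u j" unfolding W_def using BC \<pi>s by auto
  have lwW: "\<forall>w\<in>set W. length w = ?l" using WC len_C[OF j1] by auto
  have lB: "\<forall>b\<in>set (map B \<pi>s). length b = ?N" unfolding B_def by auto
  have lenW: "length W = length \<pi>s * ?N" unfolding W_def using len_concat[OF lB] by simp
  have u1C: "u j 1 \<in> Cset l1 u j" using N1 unfolding Cset_def by auto
  obtain \<pi> where \<pi>: "\<pi> permutes ?S" and v: "v = concat (B \<pi>)" using step.prems(2) Cstep[OF j1] unfolding B_def by blast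
  have "[1..<?N+1] = 1 # [Suc 1..<?N+1]" using N1 by (intro upt_conv_Cons) simp
  then have "B \<pi> = u j 1 # map (\<lambda>i. u j (\<pi> i)) [Suc 1..<?N + 1]" unfolding B_def using perm_fix1[OF \<pi>] by simp
  then have tv: "take ?l v = u j 1" using v len_C[OF j1 u1C] by simp
  have le: "?l \<le> mk_l l1 (Suc j)" using lS N1 by simp
  have "take ?l (drop p (concat W)) = take ?l (take (mk_l l1 (Suc j)) (drop p (concat ws)))"
    using cW le by (simp add: min_def)
  then have tk: "take ?l (drop p (concat W)) = u j 1" using step.prems(4) tv by simp
  have "?l dvd p" using step.IH[OF WC u1C _ tk] step.prems(3) le cW by simp
  then obtain q where p: "p = q * ?l" by (metis dvd_def mult.commute)
  have lpos: "0 < ?l" using l_pos[OF j1] .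
  have q: "q < length W"
  proof (rule ccontr)
    assume "\<not> q < length W"
    then have "length W * ?l \<le> q * ?l" by (intro mult_le_mono1) simp
    moreover have "length (concat ws) = length W * ?l" using len_concat[OF lwW] cW by simp
    ultimately show False using step.prems(3) cW p lpos le by linarith
  qed
  have Wq: "W ! q = u j 1" using take_drop_concat_uniform[OF lwW q] tk p by simp
  define a where "a = q div ?N"
  define r where "r = q mod ?N"
  have qa: "q = a * ?N + r" unfolding a_def r_def by (rule div_mult_mod_eq[symmetric])
  have r: "r < ?N" unfolding r_def using N1 by simp
  have a: "a < length \<pi>s"
  proof (rule ccontr)
    assume "\<not> a < length \<pi>s"
    then have "length \<pi>s * ?N \<le> a * ?N" by (intro mult_le_mono1) simp
    then show False using q lenW qa by linarith
  qed
  have "W ! q = map B \<pi>s ! a ! r" unfolding W_def qa using nth_concat_uniform[OF lB _ r] a by simp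
  also have "\<dots> = u j ((\<pi>s!a) (r+1))" unfolding B_def using a r by (simp del: upt_Suc)
  finally have e: "u j ((\<pi>s!a) (r+1)) = u j 1" using Wq by simp
  have pa: "\<pi>s!a permutes ?S" using \<pi>s a by simp
  have "(\<pi>s!a) (r+1) \<in> {1..?N}" using perm_range[OF pa] r by simp
  then have "(\<pi>s!a) (r+1) = 1" using inj_u[OF j1] e N1 by (auto dest: inj_onD)
  then have "(\<pi>s!a) (r+1) = (\<pi>s!a) 1" using perm_fix1[OF pa] by simp
  then have "r = 0" using permutes_inj[OF pa] by (auto dest: injD)
  then have "p = a * mk_l l1 (Suc j)" using p qa lS by simp
  then show ?case by simp
qed

end

lemma sw_take: "l \<le> n \<Longrightarrow> take l (subword x 0 n) = subword x 0 l"
  unfolding subword_def by (simp add: take_map)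

lemma sw_drop: "k + l \<le> n \<Longrightarrow> take l (drop k (subword x 0 n)) = subword x (int k) l"
  unfolding subword_def by (rule nth_equalityI) (auto simp: algebra_simps)

theorem lemma4p1:
  shows "\<exists>L. \<forall>l1 u. L \<le> l1 \<longrightarrow> marker_system l1 u \<longrightarrow>
    (\<forall>j\<ge>1. \<forall>x\<in>marker_X l1 u.
       subword x 0 (mk_l l1 j) \<in> Cset l1 u j \<longrightarrow>
         (\<forall>k::nat. k > 0 \<longrightarrow> subword x (int k) (mk_l l1 j) = subword x 0 (mk_l l1 j)
              \<longrightarrow> mk_l l1 j dvd k)
       \<and> ((\<exists>k>0. subword x (int k) (mk_l l1 j) = subword x 0 (mk_l l1 j)) \<longrightarrow>
            mk_l l1 j dvd (LEAST k. k > 0 \<and> subword x (int k) (mk_l l1 j) = subword x 0 (mk_l l1 j))))"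
proof (intro exI[of _ 0] allI impI ballI, intro conjI)
  fix l1 u j x
  assume ms: "marker_system l1 u" and j: "1 \<le> j" and x: "x \<in> marker_X l1 u"
    and vC: "subword x 0 (mk_l l1 j) \<in> Cset l1 u j"
  let ?l = "mk_l l1 j"
  have main: "?l dvd k" if k: "k > 0" and eq: "subword x (int k) ?l = subword x 0 ?l" for k
  proof -
    let ?n = "k + ?l"
    obtain m w where m: "1 \<le> m" and w: "w \<in> Cset l1 u m" and sw: "sublist (subword x 0 ?n) w"
      using x unfolding marker_X_def by blast
    obtain ps ss where wd: "w = ps @ subword x 0 ?n @ ss" using sw unfolding sublist_def by blast
    have lw: "length w = mk_l l1 m" using len_C[OF ms m w] .
    have lgt: "?n + length ps \<le> length w" using wd by (simp add: subword_def)
    have jm: "j \<le> m"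
    proof (rule ccontr)
      assume "\<not> j \<le> m"
      then have "mk_l l1 m \<le> ?l" using l_mono[OF m] by simp
      then show False using lgt lw k by simp
    qed
    obtain ws where ws: "set ws \<subseteq> Cset l1 u j" "w = concat ws" using concatC[OF ms j jm w] by blast
    have t1: "take ?l (drop (length ps) w) = subword x 0 ?l"
      using wd sw_take[of ?l ?n x] by (simp add: take_append)
    have t2: "take ?l (drop (length ps + k) w) = subword x 0 ?l"
      using wd sw_drop[of k ?l ?n x] eq by (simp add: take_append)
    have d1: "?l dvd length ps" using align[OF ms j ws(1) vC _ ] t1 lgt ws(2) by simp
    have d2: "?l dvd length ps + k" using align[OF ms j ws(1) vC _ ] t2 lgt ws(2) by simp
    show ?thesis using d1 d2 by (simp add: dvd_add_right_iff)
  qed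
  show "\<forall>k::nat. k > 0 \<longrightarrow> subword x (int k) ?l = subword x 0 ?l \<longrightarrow> ?l dvd k" using main by blast
  show "(\<exists>k>0. subword x (int k) ?l = subword x 0 ?l) \<longrightarrow>
            ?l dvd (LEAST k. k > 0 \<and> subword x (int k) ?l = subword x 0 ?l)"
  proof
    assume ex: "\<exists>k>0. subword x (int k) ?l = subword x 0 ?l"
    show "?l dvd (LEAST k. k > 0 \<and> subword x (int k) ?l = subword x 0 ?l)"
      using LeastI_ex[OF ex] main by blast
  qed
qed

end
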